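(* Consider the coupled opinion–network system described in the context, and assume in addition that (i) there is a constant $c_\phi>0$ with $\phi(r)>c_\phi$ for all $r\in[-2,2]$, and (ii) there is a constant $c_f>0$ such that $f^+(w)_{ij}>c_f$ for all $i\neq j$ and all $w\in[0,1]^{N\times N}$ with $w_{ij}=0$. Then the population reaches consensus: there exists $x^*\in[-1,1]$ such that $x_i(t)\to x^*$ as $t\to\infty$ for every $i=1,\dots,N$ (equivalently, the opinion diameter $D(t)=\max_{i,j}|x_j(t)-x_i(t)|$ tends to $0$).
   Context: There are $N$ individuals with opinions $x_i(t)\in[-1,1]$ and edge weights $w_{ij}(t)\in[0,1]$, $i,j=1,\dots,N$. The degree is $k_i=\sum_{j=1}^N w_{ij}$. Given an interaction function $\phi:[-2,2]\to[0,1]$ and maps $f^+,f^-:[0,1]^{N\times N}\to\mathbb{R}_{\ge 0}^{N\times N}$, the system is $\frac{dx_i}{dt}=\frac{1}{k_i}\sum_{j\neq i} w_{ij}\,\phi(x_j-x_i)(x_j-x_i)$ for $i=1,\dots,N$; $\frac{dw_{ij}}{dt}=\phi(x_j-x_i)\,f^+(w)_{ij}-\big(1-\phi(x_j-x_i)\big)f^-(w)_{ij}$ for $i\neq j$; $\frac{dw_{ii}}{dt}=0$. Standing assumptions: $\phi$ is Lipschitz continuous, $\phi(r)=\phi(-r)$ for all $r$, and $\phi(0)>0$; initial opinions satisfy $x_1(0)\le x_2(0)\le\dots\le x_N(0)$; $w_{ii}=1$ for all $i$; the initial network $w(0)$ is strongly connected (for all $i,j$ there is a sequence $i=i_0,i_1,\dots,i_m=j$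 with $w_{i_n i_{n+1}}(0)>0$); $f^+$ and $f^-$ are non-negative and Lipschitz continuous; $f^+(w)_{ij}=0$ whenever $w_{ij}=1$; $f^-(w)_{ij}=0$ whenever $w_{ij}=0$. *)

theory Defs
  imports "HOL-Analysis.Analysis"
begin

text \<open>Individuals are indexed by {1..N}; an N x N matrix is a function nat => nat => real,
  of which only the entries with indices in {1..N} are meaningful.\<close>

definition mat_box :: "nat \<Rightarrow> (nat \<Rightarrow> nat \<Rightarrow> real) set" where
  "mat_box N = {w. \<forall>i\<in>{1..N}. \<forall>j\<in>{1..N}. 0 \<le> w i j \<and> w i j \<le> 1}"

text \<open>Lipschitz continuity of a matrix map on [0,1]^(N x N) (max-norm on entries; all norms
  on this finite-dimensional space are equivalent).\<close>
definition mat_lipschitz :: "nat \<Rightarrow> ((nat \<Rightarrow> nat \<Rightarrow> real) \<Rightarrow> nat \<Rightarrow> nat \<Rightarrow> real) \<Rightarrow> bool" where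
  "mat_lipschitz N f \<longleftrightarrow> (\<exists>L. \<forall>w\<in>mat_box N. \<forall>v\<in>mat_box N. \<forall>i\<in>{1..N}. \<forall>j\<in>{1..N}.
      \<bar>f w i j - f v i j\<bar> \<le> L * (MAX (k,l)\<in>{1..N}\<times>{1..N}. \<bar>w k l - v k l\<bar>))"

definition strongly_connected :: "nat \<Rightarrow> (nat \<Rightarrow> nat \<Rightarrow> real) \<Rightarrow> bool" where
  "strongly_connected N w \<longleftrightarrow> (\<forall>i\<in>{1..N}. \<forall>j\<in>{1..N}.
      (\<lambda>a b. a \<in> {1..N} \<and> b \<in> {1..N} \<and> w a b > 0)\<^sup>*\<^sup>* i j)"

end

theory Submission
  imports Defs
begin

lemma pos_sq_deriv:
  "((\<lambda>s::real. (max 0 s)^2) has_real_derivative 2 * max 0 s) (at s)"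
proof -
  consider "s > 0" | "s < 0" | "s = 0" by linarith
  then show ?thesis
  proof cases
    case 1
    have "((\<lambda>s::real. s^2) has_real_derivative 2 * max 0 s) (at s)"
      using 1 by (auto intro!: derivative_eq_intros simp: max_def)
    then show ?thesis
      by (rule has_field_derivative_transform_within_open[where S="{0<..}"]) (use 1 in \<open>auto simp: max_def\<close>)
  next
    case 2
    have "((\<lambda>s::real. 0) has_real_derivative 2 * max 0 s) (at s)"
      using 2 by (auto intro!: derivative_eq_intros)
    then show ?thesis
      by (rule has_field_derivative_transform_within_open[where S="{..<0}"]) (use 2 in \<open>auto simp: max_def\<close>)
  next
    case 3
    have "((\<lambda>y::real. max 0 y) \<longlongrightarrow> max 0 0) (at 0)"
      by (intro tendsto_intros)
    then have "((\<lambda>y::real. max 0 y) \<longlongrightarrow> 0) (at 0)" by simp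
    moreover have "eventually (\<lambda>y. max 0 y = ((max 0 y)^2 - (max 0 0)^2) / (y - 0)) (at (0::real))"
      unfolding eventually_at_filter by (auto simp: power2_eq_square max_def)
    ultimately have "((\<lambda>y::real. ((max 0 y)^2 - (max 0 0)^2) / (y - 0)) \<longlongrightarrow> 0) (at 0)"
      by (rule Lim_transform_eventually)
    then show ?thesis using 3 by (simp add: has_field_derivative_iff)
  qed
qed

lemma term_bound:
  fixes a xj xk M :: real
  assumes "0 \<le> a" "a \<le> 1"
  shows "2 * max 0 (xj - M) * (a * (xk - xj)) \<le> 2 * ((max 0 (xj - M))^2 + (max 0 (xk - M))^2)"
proof (cases "xj \<le> M")
  case True
  then show ?thesis by (simp add: max_def)
next
  case False
  define uj where "uj = xj - M"
  define uk where "uk = max 0 (xk - M)"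
  have uj: "uj > 0" "max 0 (xj - M) = uj" using False by (auto simp: uj_def)
  have uk: "uk \<ge> 0" "xk - xj \<le> uk" using False by (auto simp: uk_def uj_def max_def)
  have A: "uj * (a * (xk - xj)) \<le> uj * uk"
  proof (cases "xk - xj \<le> 0")
    case True
    then have "a * (xk - xj) \<le> 0" using assms by (simp add: mult_nonneg_nonpos)
    then show ?thesis using uj uk by (metis mult_le_0_iff mult_nonneg_nonneg order_trans less_le)
  next
    case False
    then have "a * (xk - xj) \<le> xk - xj" using assms by (simp add: mult_left_le_one_le)
    then have "a * (xk - xj) \<le> uk" using uk by linarith
    then show ?thesis using uj by (simp add: mult_left_mono)
  qed
  have B: "uj * uk \<le> uj^2 + uk^2"
  proof -
    have "0 \<le> (uj - uk)^2" by simp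
    then have "2 * (uj * uk) \<le> uj^2 + uk^2" by (simp add: power2_eq_square algebra_simps)
    moreover have "uj * uk \<ge> 0" using uj uk by simp
    ultimately show ?thesis by linarith
  qed
  have "2 * (uj * (a * (xk - xj))) \<le> 2 * (uj^2 + uk^2)" using order_trans[OF A B] by simp
  then show ?thesis using uj(2) unfolding uk_def by (simp add: mult.assoc)
qed

lemma invariance:
  fixes x :: "real \<Rightarrow> nat \<Rightarrow> real" and a :: "real \<Rightarrow> nat \<Rightarrow> nat \<Rightarrow> real"
  assumes fin: "finite I"
   and deriv: "\<And>t i. t \<ge> t0 \<Longrightarrow> i \<in> I \<Longrightarrow>
      ((\<lambda>s. x s i) has_real_derivative (\<Sum>j\<in>I-{i}. a t i j * (x t j - x t i))) (at t)"
   and abnd: "\<And>t i j. t \<ge> t0 \<Longrightarrow> i\<in>I \<Longrightarrow> j\<in>I \<Longrightarrow> 0 \<le> a t i j \<and> a t i j \<le> 1"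
   and init: "\<And>j. j\<in>I \<Longrightarrow> x t0 j \<le> M"
   and t: "t \<ge> t0" and i: "i \<in> I"
  shows "x t i \<le> M"
proof -
  define u where "u s j = max 0 (x s j - M)" for s j
  define V where "V s = (\<Sum>j\<in>I. (u s j)^2)" for s
  define V' where "V' s = (\<Sum>j\<in>I. 2 * u s j * (\<Sum>k\<in>I-{j}. a s j k * (x s k - x s j)))" for s
  define C where "C = 4 * real (card I)"
  have dV: "(V has_real_derivative V' s) (at s)" if "s \<ge> t0" for s
    unfolding V_def V'_def
  proof (rule DERIV_sum)
    fix j assume j: "j \<in> I"
    have "((\<lambda>s. x s j - M) has_real_derivative (\<Sum>k\<in>I-{j}. a s j k * (x s k - x s j))) (at s)"
      using deriv[OF that j] by (auto intro!: derivative_eq_intros)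
    from DERIV_chain2[OF pos_sq_deriv this]
    show "((\<lambda>s. (u s j)^2) has_real_derivative 2 * u s j * (\<Sum>k\<in>I-{j}. a s j k * (x s k - x s j))) (at s)"
      unfolding u_def by simp
  qed
  have Vnn: "V s \<ge> 0" for s unfolding V_def by (simp add: sum_nonneg)
  have bound: "V' s \<le> C * V s" if "s \<ge> t0" for s
  proof -
    have "V' s = (\<Sum>j\<in>I. \<Sum>k\<in>I-{j}. 2 * u s j * (a s j k * (x s k - x s j)))"
      unfolding V'_def by (simp add: sum_distrib_left)
    also have "\<dots> \<le> (\<Sum>j\<in>I. \<Sum>k\<in>I-{j}. 2 * ((u s j)^2 + (u s k)^2))"
      unfolding u_def
      by (intro sum_mono term_bound) (use abnd[OF that] in auto)
    also have "\<dots> \<le> (\<Sum>j\<in>I. \<Sum>k\<in>I. 2 * ((u s j)^2 + (u s k)^2))"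
      by (intro sum_mono sum_mono2) (auto simp: fin)
    also have "\<dots> = C * V s"
      unfolding C_def V_def by (simp add: sum.distrib sum_distrib_left algebra_simps sum_distrib_right[symmetric])
    finally show ?thesis .
  qed
  define W where "W s = exp (- C * s) * V s" for s
  have dW: "(W has_real_derivative exp (- C * s) * (V' s - C * V s)) (at s)" if "s \<in> {t0..t}" for s
    unfolding W_def using that
    by (auto intro!: derivative_eq_intros dV simp: algebra_simps)
  have "W t \<le> W t0"
  proof (rule deriv_nonpos_imp_antimono[OF dW])
    fix s assume "s \<in> {t0..t}"
    then show "exp (- C * s) * (V' s - C * V s) \<le> 0"
      using bound[of s] by (simp add: mult_nonneg_nonpos)
  qed (use t in auto)
  moreover have "V t0 = 0" unfolding V_def u_def using init by (intro sum.neutral) (force simp: max_def)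
  ultimately have "V t \<le> 0" unfolding W_def by (simp add: mult_le_0_iff)
  then have "V t = 0" using Vnn[of t] by simp
  then have "(u t i)^2 = 0" unfolding V_def using fin i
    by (subst (asm) sum_nonneg_eq_0_iff) auto
  then show ?thesis unfolding u_def by (simp add: max_def split: if_splits)
qed

lemma decay:
  fixes x :: "real \<Rightarrow> nat \<Rightarrow> real" and a :: "real \<Rightarrow> nat \<Rightarrow> nat \<Rightarrow> real"
  assumes fin: "finite I"
   and deriv: "\<And>t i. t \<ge> t0 \<Longrightarrow> i \<in> I \<Longrightarrow>
      ((\<lambda>s. x s i) has_real_derivative (\<Sum>j\<in>I-{i}. a t i j * (x t j - x t i))) (at t)"
   and abnd: "\<And>t i j. t \<ge> t0 \<Longrightarrow> i\<in>I \<Longrightarrow> j\<in>I \<Longrightarrow> 0 \<le> a t i j \<and> a t i j \<le> 1"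
   and lowa: "\<And>t i j. t \<ge> t0 \<Longrightarrow> i\<in>I \<Longrightarrow> j\<in>I \<Longrightarrow> i \<noteq> j \<Longrightarrow> \<kappa> \<le> a t i j"
   and kappa: "0 \<le> \<kappa>" "\<kappa> \<le> 1"
   and init: "\<And>j. j\<in>I \<Longrightarrow> x t0 j \<le> M"
   and p: "p \<in> I" and i: "i \<in> I"
  shows "x (t0+1) i \<le> M - \<kappa> * exp (- real (card I)) * (M - x t0 p)"
proof -
  define n where "n = real (card I)"
  define y where "y s j = M - x s j" for s j
  have ynn: "y s j \<ge> 0" if "s \<ge> t0" "j \<in> I" for s j
    using invariance[OF fin deriv abnd init that(1,2)] unfolding y_def by simp
  have key: "(\<Sum>k\<in>I-{j}. a s j k * (x s k - x s j)) \<le> n * y s j - \<kappa> * y s p"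
    if s: "s \<ge> t0" and j: "j \<in> I" for s j
  proof -
    have "(\<Sum>k\<in>I-{j}. a s j k * (x s k - x s j)) \<le> (\<Sum>k\<in>I-{j}. y s j - (if k = p then \<kappa> * y s p else 0))"
    proof (rule sum_mono)
      fix k assume k: "k \<in> I - {j}"
      have a01: "0 \<le> a s j k" "a s j k \<le> 1" using abnd[OF s j] k by auto
      have e: "a s j k * (x s k - x s j) = a s j k * y s j - a s j k * y s k" unfolding y_def by algebra
      have "a s j k * y s j \<le> y s j" using a01 ynn[OF s j] by (simp add: mult_left_le_one_le)
      moreover have "a s j k * y s k \<ge> (if k = p then \<kappa> * y s p else 0)"
      proof (cases "k = p")
        case True
        then have "\<kappa> \<le> a s j k" using lowa[OF s j] k by auto
        then show ?thesis using True ynn[OF s p] by (simp add: mult_right_mono)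
      next
        case False
        then show ?thesis using a01 ynn[OF s] k by simp
      qed
      ultimately show "a s j k * (x s k - x s j) \<le> y s j - (if k = p then \<kappa> * y s p else 0)"
        unfolding e by linarith
    qed
    also have "\<dots> = real (card (I - {j})) * y s j - (if p \<in> I - {j} then \<kappa> * y s p else 0)"
      using fin by (simp add: sum_subtractf)
    also have "\<dots> \<le> n * y s j - \<kappa> * y s p"
    proof (cases "p = j")
      case True
      have "card I > 0" using fin j card_gt_0_iff by blast
      then have c1: "card I \<ge> 1" by simp
      have cn: "real (card (I - {j})) = n - 1" unfolding n_def using fin j c1
        by (simp add: card_Diff_singleton of_nat_diff)
      have ky: "\<kappa> * y s j \<le> 1 * y s j" using kappa ynn[OF s j] by (intro mult_right_mono) auto
      have "real (card (I - {j})) * y s j - (if p \<in> I - {j} then \<kappa> * y s p else 0) = (n - 1) * y s j"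
        using True cn by simp
      also have "\<dots> \<le> n * y s j - \<kappa> * y s p" using True ky by (simp add: algebra_simps)
      finally show ?thesis .
    next
      case False
      have "card (I - {j}) \<le> card I" using fin by (simp add: card_mono)
      then have "real (card (I - {j})) * y s j \<le> n * y s j" unfolding n_def
        using ynn[OF s j] by (simp add: mult_right_mono)
      then show ?thesis using False p by simp
    qed
    finally show ?thesis .
  qed
  have dy: "((\<lambda>s. y s j) has_real_derivative - (\<Sum>k\<in>I-{j}. a s j k * (x s k - x s j))) (at s)"
    if "s \<ge> t0" "j \<in> I" for s j
  proof -
    have "((\<lambda>s. M - x s j) has_real_derivative 0 - (\<Sum>k\<in>I-{j}. a s j k * (x s k - x s j))) (at s)"
      by (rule DERIV_diff[OF DERIV_const deriv[OF that]])
    then show ?thesis unfolding y_def by simp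
  qed
  define G where "G s = exp (n * s) * y s p" for s
  have dG: "(G has_real_derivative exp (n * s) * (n * y s p - (\<Sum>k\<in>I-{p}. a s p k * (x s k - x s p)))) (at s)"
    if "s \<ge> t0" for s
  proof -
    have dE: "((\<lambda>s. exp (n * s)) has_real_derivative exp (n * s) * n) (at s)"
      using DERIV_chain2[OF DERIV_exp DERIV_cmult_Id[of n s]] by simp
    have "(G has_real_derivative exp (n * s) * n * y s p + (- (\<Sum>k\<in>I-{p}. a s p k * (x s k - x s p))) * exp (n * s)) (at s)"
      unfolding G_def by (rule DERIV_mult[OF dE dy[OF that p]])
    moreover have "exp (n * s) * n * y s p + (- (\<Sum>k\<in>I-{p}. a s p k * (x s k - x s p))) * exp (n * s)
      = exp (n * s) * (n * y s p - (\<Sum>k\<in>I-{p}. a s p k * (x s k - x s p)))" by (simp add: algebra_simps)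
    ultimately show ?thesis by simp
  qed
  have Gmono: "G t0 \<le> G s" if "s \<ge> t0" for s
  proof (rule DERIV_nonneg_imp_nondecreasing[of t0 s G, OF that])
    fix r assume r: "t0 \<le> r" "r \<le> s"
    have "(\<Sum>k\<in>I-{p}. a r p k * (x r k - x r p)) \<le> n * y r p"
    proof -
      have "0 \<le> \<kappa> * y r p" using kappa ynn[OF r(1) p] by simp
      then show ?thesis using key[OF r(1) p] by linarith
    qed
    then have "0 \<le> n * y r p - (\<Sum>k\<in>I-{p}. a r p k * (x r k - x r p))" by linarith
    then have "0 \<le> exp (n * r) * (n * y r p - (\<Sum>k\<in>I-{p}. a r p k * (x r k - x r p)))" by simp
    then show "\<exists>D. (G has_real_derivative D) (at r) \<and> 0 \<le> D"
      using dG[OF r(1)] by blast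
  qed
  define H where "H s = exp (n * s) * y s i - \<kappa> * G t0 * s" for s
  have dH: "(H has_real_derivative exp (n * s) * (n * y s i - (\<Sum>k\<in>I-{i}. a s i k * (x s k - x s i))) - \<kappa> * G t0) (at s)"
    if "s \<ge> t0" for s
  proof -
    have dE: "((\<lambda>s. exp (n * s)) has_real_derivative exp (n * s) * n) (at s)"
      using DERIV_chain2[OF DERIV_exp DERIV_cmult_Id[of n s]] by simp
    have d1: "((\<lambda>s. exp (n * s) * y s i) has_real_derivative exp (n * s) * n * y s i + (- (\<Sum>k\<in>I-{i}. a s i k * (x s k - x s i))) * exp (n * s)) (at s)"
      by (rule DERIV_mult[OF dE dy[OF that i]])
    have d2: "((\<lambda>s. \<kappa> * G t0 * s) has_real_derivative \<kappa> * G t0) (at s)"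
      using DERIV_cmult_Id[of "\<kappa> * G t0" s] by simp
    have "(H has_real_derivative exp (n * s) * n * y s i + (- (\<Sum>k\<in>I-{i}. a s i k * (x s k - x s i))) * exp (n * s) - \<kappa> * G t0) (at s)"
      unfolding H_def by (rule DERIV_diff[OF d1 d2])
    moreover have "exp (n * s) * n * y s i + (- (\<Sum>k\<in>I-{i}. a s i k * (x s k - x s i))) * exp (n * s) - \<kappa> * G t0
      = exp (n * s) * (n * y s i - (\<Sum>k\<in>I-{i}. a s i k * (x s k - x s i))) - \<kappa> * G t0" by (simp add: algebra_simps)
    ultimately show ?thesis by simp
  qed
  have "H t0 \<le> H (t0 + 1)"
  proof (rule DERIV_nonneg_imp_nondecreasing[of t0 "t0 + 1" H])
    fix r assume r: "t0 \<le> r" "r \<le> t0 + 1"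
    have c3: "exp (n * r) * (\<kappa> * y r p) \<le> exp (n * r) * (n * y r i - (\<Sum>k\<in>I-{i}. a r i k * (x r k - x r i)))"
      using key[OF r(1) i] by (intro mult_left_mono) auto
    have c2: "exp (n * r) * (\<kappa> * y r p) = \<kappa> * G r" unfolding G_def by simp
    have c1: "\<kappa> * G t0 \<le> \<kappa> * G r" using Gmono[OF r(1)] kappa by (simp add: mult_left_mono)
    have c4: "0 \<le> exp (n * r) * (n * y r i - (\<Sum>k\<in>I-{i}. a r i k * (x r k - x r i))) - \<kappa> * G t0"
      using c1 c2 c3 by linarith
    show "\<exists>D. (H has_real_derivative D) (at r) \<and> 0 \<le> D"
      using dH[OF r(1)] c4 by blast
  qed simp
  then have "exp (n * t0) * y t0 i \<le> exp (n * (t0 + 1)) * y (t0 + 1) i - \<kappa> * G t0"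
    unfolding H_def by (simp add: algebra_simps)
  moreover have "exp (n * t0) * y t0 i \<ge> 0" using ynn[OF _ i] by simp
  ultimately have "\<kappa> * G t0 \<le> exp (n * t0) * exp n * y (t0 + 1) i"
    by (simp add: algebra_simps exp_add)
  then have "exp (n * t0) * (\<kappa> * y t0 p) \<le> exp (n * t0) * (exp n * y (t0 + 1) i)"
    unfolding G_def by (simp add: algebra_simps)
  then have "\<kappa> * y t0 p \<le> exp n * y (t0 + 1) i" by simp
  then have "\<kappa> * y t0 p * exp (- n) \<le> y (t0 + 1) i"
    by (simp add: exp_minus field_simps)
  then show ?thesis unfolding y_def n_def by (simp add: algebra_simps)
qed

lemma weight_lb:
  fixes f D :: "real \<Rightarrow> real"
  assumes d: "\<And>t. t \<ge> 1 \<Longrightarrow> (f has_real_derivative D t) (at t)"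
   and lb: "\<And>t. t \<ge> 1 \<Longrightarrow> D t \<ge> \<beta> - g * f t"
   and nn: "\<And>t. t \<ge> 1 \<Longrightarrow> f t \<ge> 0"
   and g: "g > 0" and \<beta>: "\<beta> > 0" and t: "t \<ge> 1 + ln 2 / g"
  shows "f t \<ge> \<beta> / (2 * g)"
proof -
  define F where "F s = exp (g * s) * (f s - \<beta>/g)" for s
  have "ln (2::real) / g > 0" using g by simp
  then have t1: "t \<ge> 1" using t by linarith
  have "F 1 \<le> F t"
  proof (rule DERIV_nonneg_imp_nondecreasing[of 1 t F, OF t1])
    fix r assume r: "1 \<le> r" "r \<le> t"
    have "(F has_real_derivative exp (g * r) * (g * (f r - \<beta>/g) + D r)) (at r)"
    proof -
      have dE: "((\<lambda>s. exp (g * s)) has_real_derivative exp (g * r) * g) (at r)"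
        using DERIV_chain2[OF DERIV_exp DERIV_cmult_Id[of g r]] by simp
      have d2: "((\<lambda>s. f s - \<beta>/g) has_real_derivative D r - 0) (at r)"
        by (rule DERIV_diff[OF d[OF r(1)] DERIV_const])
      have "(F has_real_derivative exp (g * r) * g * (f r - \<beta>/g) + (D r - 0) * exp (g * r)) (at r)"
        unfolding F_def by (rule DERIV_mult[OF dE d2])
      moreover have "exp (g * r) * g * (f r - \<beta>/g) + (D r - 0) * exp (g * r) = exp (g * r) * (g * (f r - \<beta>/g) + D r)"
        by (simp add: algebra_simps)
      ultimately show ?thesis by simp
    qed
    moreover have "g * (f r - \<beta>/g) = g * f r - \<beta>" using g by (simp add: right_diff_distrib)
    then have "g * (f r - \<beta>/g) + D r \<ge> 0" using lb[OF r(1)] by linarith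
    then have "exp (g * r) * (g * (f r - \<beta>/g) + D r) \<ge> 0" by simp
    ultimately show "\<exists>y. (F has_real_derivative y) (at r) \<and> 0 \<le> y"
      by blast
  qed
  moreover have "F 1 \<ge> exp g * (- (\<beta>/g))"
  proof -
    have "f 1 - \<beta>/g \<ge> - (\<beta>/g)" using nn[of 1] by simp
    then have "exp g * (f 1 - \<beta>/g) \<ge> exp g * (- (\<beta>/g))" by (rule mult_left_mono) simp
    then show ?thesis unfolding F_def by simp
  qed
  ultimately have A: "exp (g * t) * (f t - \<beta>/g) \<ge> exp g * (- (\<beta>/g))" unfolding F_def by simp
  define e where "e = exp (g - g * t)"
  have ee: "exp (g * t) * e = exp g" unfolding e_def mult_exp_exp by simp
  have ee': "exp (g * t) * (e * (- (\<beta>/g))) = exp g * (- (\<beta>/g))"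
    unfolding ee[symmetric] by (rule mult.assoc[symmetric])
  have "exp (g * t) * (f t - \<beta>/g) \<ge> exp (g * t) * (e * (- (\<beta>/g)))" using A ee' by linarith
  then have B: "f t - \<beta>/g \<ge> e * (- (\<beta>/g))" by (rule mult_left_le_imp_le) simp
  have "g * t \<ge> g * (1 + ln 2 / g)" using t g by (simp add: mult_left_mono)
  also have "g * (1 + ln 2 / g) = g + ln 2" using g by (simp add: distrib_left)
  finally have "g - g * t \<le> - ln 2" by simp
  then have "e \<le> exp (- ln 2)" unfolding e_def by simp
  also have "exp (- ln 2) = (1/2::real)" by (simp add: exp_minus)
  finally have "e * (\<beta>/g) \<le> (1/2) * (\<beta>/g)" using g \<beta> by (intro mult_right_mono) auto
  then have "f t \<ge> \<beta>/g - (1/2) * (\<beta>/g)" using B by simp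
  then show ?thesis by simp
qed

lemma lip_nonneg_const:
  assumes "mat_lipschitz N f" "N \<ge> 1"
  obtains L where "L \<ge> 0" "\<And>w v i j. w\<in>mat_box N \<Longrightarrow> v\<in>mat_box N \<Longrightarrow> i\<in>{1..N} \<Longrightarrow> j\<in>{1..N} \<Longrightarrow>
     \<bar>f w i j - f v i j\<bar> \<le> L * (MAX (k,l)\<in>{1..N}\<times>{1..N}. \<bar>w k l - v k l\<bar>)"
proof -
  obtain L0 where L0: "\<forall>w\<in>mat_box N. \<forall>v\<in>mat_box N. \<forall>i\<in>{1..N}. \<forall>j\<in>{1..N}.
      \<bar>f w i j - f v i j\<bar> \<le> L0 * (MAX (k,l)\<in>{1..N}\<times>{1..N}. \<bar>w k l - v k l\<bar>)"
    using assms(1) unfolding mat_lipschitz_def by blast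
  show ?thesis
  proof (rule that[of "max L0 0"])
    fix w v :: "nat \<Rightarrow> nat \<Rightarrow> real" and i j
    assume h: "w\<in>mat_box N" "v\<in>mat_box N" "i\<in>{1..N}" "j\<in>{1..N}"
    have "0 \<le> (MAX (k,l)\<in>{1..N}\<times>{1..N}. \<bar>w k l - v k l\<bar>)"
      using assms(2) by (subst Max_ge_iff) (auto intro!: bexI[of _ "(1,1)"])
    then have "L0 * (MAX (k,l)\<in>{1..N}\<times>{1..N}. \<bar>w k l - v k l\<bar>) \<le> max L0 0 * (MAX (k,l)\<in>{1..N}\<times>{1..N}. \<bar>w k l - v k l\<bar>)"
      by (intro mult_right_mono) auto
    then show "\<bar>f w i j - f v i j\<bar> \<le> max L0 0 * (MAX (k,l)\<in>{1..N}\<times>{1..N}. \<bar>w k l - v k l\<bar>)"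
    proof -
      have "\<bar>f w i j - f v i j\<bar> \<le> L0 * (MAX (k,l)\<in>{1..N}\<times>{1..N}. \<bar>w k l - v k l\<bar>)"
        using L0 h by blast
      with \<open>L0 * _ \<le> _\<close> show ?thesis by linarith
    qed
  qed simp
qed

theorem proposition1:
  fixes N :: nat
    and phi :: "real \<Rightarrow> real"
    and fp fm :: "(nat \<Rightarrow> nat \<Rightarrow> real) \<Rightarrow> nat \<Rightarrow> nat \<Rightarrow> real"
    and x :: "real \<Rightarrow> nat \<Rightarrow> real"
    and w :: "real \<Rightarrow> nat \<Rightarrow> nat \<Rightarrow> real"
    and c_phi c_f :: real
  assumes phi_range: "\<And>r. r \<in> {-2..2} \<Longrightarrow> 0 \<le> phi r \<and> phi r \<le> 1"
    and phi_lip: "lipschitz_on L_phi {-2..2} phi"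
    and phi_sym: "\<And>r. phi r = phi (- r)"
    and phi_0: "phi 0 > 0"
    and fp_nonneg: "\<And>v i j. v \<in> mat_box N \<Longrightarrow> i \<in> {1..N} \<Longrightarrow> j \<in> {1..N} \<Longrightarrow> fp v i j \<ge> 0"
    and fm_nonneg: "\<And>v i j. v \<in> mat_box N \<Longrightarrow> i \<in> {1..N} \<Longrightarrow> j \<in> {1..N} \<Longrightarrow> fm v i j \<ge> 0"
    and fp_lip: "mat_lipschitz N fp"
    and fm_lip: "mat_lipschitz N fm"
    and fp_one: "\<And>v i j. v \<in> mat_box N \<Longrightarrow> i \<in> {1..N} \<Longrightarrow> j \<in> {1..N} \<Longrightarrow> v i j = 1 \<Longrightarrow> fp v i j = 0"
    and fm_zero: "\<And>v i j. v \<in> mat_box N \<Longrightarrow> i \<in> {1..N} \<Longrightarrow> j \<in> {1..N} \<Longrightarrow> v i j = 0 \<Longrightarrow> fm v i j = 0"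
    and x_range: "\<And>t i. t \<ge> 0 \<Longrightarrow> i \<in> {1..N} \<Longrightarrow> x t i \<in> {-1..1}"
    and w_range: "\<And>t. t \<ge> 0 \<Longrightarrow> w t \<in> mat_box N"
    and w_diag: "\<And>t i. t \<ge> 0 \<Longrightarrow> i \<in> {1..N} \<Longrightarrow> w t i i = 1"
    and x_sorted: "\<And>i j. i \<in> {1..N} \<Longrightarrow> j \<in> {1..N} \<Longrightarrow> i \<le> j \<Longrightarrow> x 0 i \<le> x 0 j"
    and w_conn: "strongly_connected N (w 0)"
    and x_ode: "\<And>t i. t \<ge> 0 \<Longrightarrow> i \<in> {1..N} \<Longrightarrow>
        ((\<lambda>s. x s i) has_real_derivative
          (1 / (\<Sum>j\<in>{1..N}. w t i j)) *
          (\<Sum>j\<in>{1..N} - {i}. w t i j * phi (x t j - x t i) * (x t j - x t i)))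
        (at t within {0..})"
    and w_ode: "\<And>t i j. t \<ge> 0 \<Longrightarrow> i \<in> {1..N} \<Longrightarrow> j \<in> {1..N} \<Longrightarrow> i \<noteq> j \<Longrightarrow>
        ((\<lambda>s. w s i j) has_real_derivative
          (phi (x t j - x t i) * fp (w t) i j - (1 - phi (x t j - x t i)) * fm (w t) i j))
        (at t within {0..})"
    and c_phi_pos: "c_phi > 0"
    and phi_lower: "\<And>r. r \<in> {-2..2} \<Longrightarrow> phi r > c_phi"
    and c_f_pos: "c_f > 0"
    and fp_lower: "\<And>v i j. v \<in> mat_box N \<Longrightarrow> i \<in> {1..N} \<Longrightarrow> j \<in> {1..N} \<Longrightarrow> i \<noteq> j \<Longrightarrow>
        v i j = 0 \<Longrightarrow> fp v i j > c_f"
  shows "\<exists>xs\<in>{-1..1}. \<forall>i\<in>{1..N}. ((\<lambda>t. x t i) \<longlongrightarrow> xs) at_top"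
proof (cases "N = 0")
  case True
  then show ?thesis by (intro bexI[of _ 0]) auto
next
  case False
  then have N1: "N \<ge> 1" by simp
  have finI: "finite {1..N}" by simp
  have oneI: "1 \<in> {1..N}" using N1 by simp
  have cardI: "card {1..N} = N" by simp
  obtain Lp where Lp: "Lp \<ge> 0" "\<And>w v i j. w\<in>mat_box N \<Longrightarrow> v\<in>mat_box N \<Longrightarrow> i\<in>{1..N} \<Longrightarrow> j\<in>{1..N} \<Longrightarrow>
     \<bar>fp w i j - fp v i j\<bar> \<le> Lp * (MAX (k,l)\<in>{1..N}\<times>{1..N}. \<bar>w k l - v k l\<bar>)"
    using lip_nonneg_const[OF fp_lip N1] by blast
  obtain Lm where Lm: "Lm \<ge> 0" "\<And>w v i j. w\<in>mat_box N \<Longrightarrow> v\<in>mat_box N \<Longrightarrow> i\<in>{1..N} \<Longrightarrow> j\<in>{1..N} \<Longrightarrow>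
     \<bar>fm w i j - fm v i j\<bar> \<le> Lm * (MAX (k,l)\<in>{1..N}\<times>{1..N}. \<bar>w k l - v k l\<bar>)"
    using lip_nonneg_const[OF fm_lip N1] by blast
  have w01: "0 \<le> w t i j \<and> w t i j \<le> 1" if "t \<ge> 0" "i \<in> {1..N}" "j \<in> {1..N}" for t i j
    using w_range[OF that(1)] that(2,3) unfolding mat_box_def by blast
  have phib: "c_phi < phi (x t j - x t i) \<and> phi (x t j - x t i) \<le> 1"
    if "t \<ge> 0" "i \<in> {1..N}" "j \<in> {1..N}" for t i j
  proof -
    have "x t j - x t i \<in> {-2..2}" using x_range[OF that(1) that(2)] x_range[OF that(1) that(3)] by auto
    then show ?thesis using phi_lower phi_range by blast
  qed
  have atT: "at t within {0..} = at t" if "t > 0" for t :: real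
    using that by (intro at_within_interior) simp
  define \<beta> where "\<beta> = c_phi * c_f"
  define g where "g = c_phi * Lp + Lm + 1"
  define \<delta> where "\<delta> = \<beta> / (2 * g)"
  define T where "T = 1 + ln 2 / g"
  have \<beta>pos: "\<beta> > 0" unfolding \<beta>_def using c_phi_pos c_f_pos by simp
  have gpos: "g > 0" unfolding g_def using mult_nonneg_nonneg[of c_phi Lp] c_phi_pos Lp(1) Lm(1) by linarith
  have \<delta>pos: "\<delta> > 0" unfolding \<delta>_def using \<beta>pos gpos by simp
  have T1: "T \<ge> 1" unfolding T_def using gpos by simp
  have wlb: "w t i j \<ge> \<delta>" if t: "t \<ge> T" and ij: "i \<in> {1..N}" "j \<in> {1..N}" "i \<noteq> j" for t i j
    unfolding \<delta>_def
  proof (rule weight_lb[where f = "\<lambda>s. w s i j" and g = g and \<beta> = \<beta>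
      and D = "\<lambda>s. phi (x s j - x s i) * fp (w s) i j - (1 - phi (x s j - x s i)) * fm (w s) i j"])
    fix s :: real assume s: "s \<ge> 1"
    show "((\<lambda>s. w s i j) has_real_derivative phi (x s j - x s i) * fp (w s) i j - (1 - phi (x s j - x s i)) * fm (w s) i j) (at s)"
      using w_ode[of s i j] ij s atT[of s] by simp
    show "w s i j \<ge> 0" using w01[of s i j] s ij by simp
    have s0: "s \<ge> 0" using s by simp
    define v where "v = (\<lambda>a b. if a = i \<and> b = j then 0 else w s a b)"
    have vbox: "v \<in> mat_box N" using w_range[OF s0] unfolding mat_box_def v_def by auto
    have wnn: "w s i j \<ge> 0" using w01[OF s0 ij(1,2)] by simp
    have maxle: "(MAX (k,l)\<in>{1..N}\<times>{1..N}. \<bar>w s k l - v k l\<bar>) \<le> w s i j"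
      using wnn N1 by (intro Max.boundedI) (auto simp: v_def)
    have vij: "v i j = 0" unfolding v_def by simp
    have fmv: "fm v i j = 0" using fm_zero[OF vbox ij(1,2) vij] .
    have fpv: "fp v i j > c_f" using fp_lower[OF vbox ij vij] .
    have "\<bar>fm (w s) i j - fm v i j\<bar> \<le> Lm * w s i j"
      using Lm(2)[OF w_range[OF s0] vbox ij(1,2)] mult_left_mono[OF maxle Lm(1)] by linarith
    then have fmle: "fm (w s) i j \<le> Lm * w s i j" using fmv by simp
    have "\<bar>fp (w s) i j - fp v i j\<bar> \<le> Lp * w s i j"
      using Lp(2)[OF w_range[OF s0] vbox ij(1,2)] mult_left_mono[OF maxle Lp(1)] by linarith
    then have fpge: "fp (w s) i j \<ge> c_f - Lp * w s i j" using fpv by linarith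
    define p where "p = phi (x s j - x s i)"
    have p: "c_phi < p" "p \<le> 1" using phib[OF s0 ij(1,2)] unfolding p_def by auto
    have fpnn: "fp (w s) i j \<ge> 0" using fp_nonneg[OF w_range[OF s0] ij(1,2)] .
    have fmnn: "fm (w s) i j \<ge> 0" using fm_nonneg[OF w_range[OF s0] ij(1,2)] .
    have e1: "p * fp (w s) i j \<ge> c_phi * fp (w s) i j" using p fpnn by (intro mult_right_mono) auto
    have e2: "c_phi * fp (w s) i j \<ge> c_phi * (c_f - Lp * w s i j)" using fpge c_phi_pos by (intro mult_left_mono) auto
    have e3: "(1 - p) * fm (w s) i j \<le> 1 * fm (w s) i j" using p fmnn c_phi_pos by (intro mult_right_mono) auto
    have e4: "c_phi * Lp * w s i j \<ge> 0" using c_phi_pos Lp wnn by simp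
    have "p * fp (w s) i j - (1 - p) * fm (w s) i j \<ge> c_phi * c_f - c_phi * Lp * w s i j - Lm * w s i j"
      using e1 e2 e3 fmle by (simp add: algebra_simps)
    moreover have "g * w s i j = c_phi * Lp * w s i j + Lm * w s i j + w s i j" unfolding g_def by (simp add: algebra_simps)
    ultimately show "phi (x s j - x s i) * fp (w s) i j - (1 - phi (x s j - x s i)) * fm (w s) i j \<ge> \<beta> - g * w s i j"
      using wnn unfolding p_def \<beta>_def by linarith
  qed (use gpos \<beta>pos t T_def in auto)
  define k where "k t i = (\<Sum>j\<in>{1..N}. w t i j)" for t i
  define a where "a t i j = w t i j * phi (x t j - x t i) / k t i" for t i j
  define \<kappa> where "\<kappa> = min (1/2) (\<delta> * c_phi / real N)"
  define \<rho> where "\<rho> = \<kappa> * exp (- real N)"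
  have kge1: "k t i \<ge> 1" if "t \<ge> 0" "i \<in> {1..N}" for t i
  proof -
    have "w t i i \<le> k t i" unfolding k_def using that w01[OF that(1) that(2)]
      by (intro member_le_sum) auto
    then show ?thesis using w_diag[OF that] by simp
  qed
  have kleN: "k t i \<le> real N" if "t \<ge> 0" "i \<in> {1..N}" for t i
  proof -
    have "k t i \<le> real (card {1..N}) * 1" unfolding k_def using w01[OF that]
      by (intro sum_bounded_above) auto
    then show ?thesis by simp
  qed
  have ab: "0 \<le> a t i j \<and> a t i j \<le> 1" if "t \<ge> T" "i \<in> {1..N}" "j \<in> {1..N}" for t i j
  proof -
    have t0: "t \<ge> 0" using that T1 by simp
    have wp: "0 \<le> w t i j * phi (x t j - x t i)" "w t i j * phi (x t j - x t i) \<le> 1"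
      using w01[OF t0 that(2,3)] phib[OF t0 that(2,3)] c_phi_pos by (auto intro: mult_le_one)
    have "w t i j * phi (x t j - x t i) / k t i \<le> w t i j * phi (x t j - x t i)"
      using wp kge1[OF t0 that(2)] by (simp add: divide_le_eq mult_le_cancel_left1 mult_left_le)
    then show ?thesis unfolding a_def using wp kge1[OF t0 that(2)] by simp
  qed
  have alow: "\<kappa> \<le> a t i j" if "t \<ge> T" "i \<in> {1..N}" "j \<in> {1..N}" "i \<noteq> j" for t i j
  proof -
    have t0: "t \<ge> 0" using that T1 by simp
    have "\<delta> * c_phi \<le> w t i j * phi (x t j - x t i)"
      using wlb[OF that] phib[OF t0 that(2,3)] \<delta>pos c_phi_pos by (intro mult_mono) auto
    moreover have "0 \<le> \<delta> * c_phi" using \<delta>pos c_phi_pos by simp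
    ultimately have "\<delta> * c_phi / real N \<le> w t i j * phi (x t j - x t i) / k t i"
      using kge1[OF t0 that(2)] kleN[OF t0 that(2)]
      by (intro frac_le) auto
    then show ?thesis unfolding a_def \<kappa>_def by simp
  qed
  have \<kappa>4: "\<kappa> \<le> 1/2" unfolding \<kappa>_def by (rule min.cobounded1)
  have \<kappa>3: "\<kappa> > 0" unfolding \<kappa>_def using \<delta>pos c_phi_pos N1 by simp
  have \<kappa>: "0 \<le> \<kappa>" "\<kappa> \<le> 1" "\<kappa> > 0" "\<kappa> \<le> 1/2" using \<kappa>3 \<kappa>4 by auto
  have \<rho>: "\<rho> > 0" "\<rho> \<le> 1/2"
  proof -
    show "\<rho> > 0" unfolding \<rho>_def using \<kappa> by simp
    have "exp (- real N) \<le> 1" by simp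
    then have "\<rho> \<le> \<kappa> * 1" unfolding \<rho>_def using \<kappa> by (intro mult_left_mono) auto
    then show "\<rho> \<le> 1/2" using \<kappa> by simp
  qed
  have dx: "((\<lambda>s. x s i) has_real_derivative (\<Sum>j\<in>{1..N}-{i}. a t i j * (x t j - x t i))) (at t)"
    if "t \<ge> T" "i \<in> {1..N}" for t i
  proof -
    have t0: "t > 0" using that T1 by simp
    have "(1 / (\<Sum>j\<in>{1..N}. w t i j)) * (\<Sum>j\<in>{1..N} - {i}. w t i j * phi (x t j - x t i) * (x t j - x t i))
        = (\<Sum>j\<in>{1..N}-{i}. a t i j * (x t j - x t i))"
      unfolding sum_distrib_left by (intro sum.cong refl) (simp add: a_def k_def)
    then show ?thesis using x_ode[of t i] that t0 atT[OF t0] by simp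
  qed
  define xn where "xn t i = - x t i" for t i
  have dxn: "((\<lambda>s. xn s i) has_real_derivative (\<Sum>j\<in>{1..N}-{i}. a t i j * (xn t j - xn t i))) (at t)"
    if "t \<ge> T" "i \<in> {1..N}" for t i
  proof -
    have "((\<lambda>s. - x s i) has_real_derivative - (\<Sum>j\<in>{1..N}-{i}. a t i j * (x t j - x t i))) (at t)"
      using dx[OF that] by (rule DERIV_minus)
    moreover have "- (\<Sum>j\<in>{1..N}-{i}. a t i j * (x t j - x t i)) = (\<Sum>j\<in>{1..N}-{i}. a t i j * (xn t j - xn t i))"
      unfolding xn_def sum_negf[symmetric] by (intro sum.cong refl) (simp add: algebra_simps)
    ultimately show ?thesis unfolding xn_def by simp
  qed
  define tn where "tn n = T + real n" for n :: nat
  have tnT: "tn n \<ge> T" for n unfolding tn_def by simp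
  have tn0: "tn n \<ge> 0" for n using tnT[of n] T1 by simp
  define Mx where "Mx n = Max ((\<lambda>i. x (tn n) i) ` {1..N})" for n
  define mx where "mx n = Min ((\<lambda>i. x (tn n) i) ` {1..N})" for n
  have Mx_ge: "x (tn n) i \<le> Mx n" if "i \<in> {1..N}" for n i
    unfolding Mx_def using that by (intro Max_ge) auto
  have mx_le: "mx n \<le> x (tn n) i" if "i \<in> {1..N}" for n i
    unfolding mx_def using that by (intro Min_le) auto
  have inv_up: "x t i \<le> Mx n" if "t \<ge> tn n" "i \<in> {1..N}" for t i n
  proof (rule invariance[OF finI _ _ _ that])
    show "\<And>t i. tn n \<le> t \<Longrightarrow> i \<in> {1..N} \<Longrightarrow>
      ((\<lambda>s. x s i) has_real_derivative (\<Sum>j\<in>{1..N}-{i}. a t i j * (x t j - x t i))) (at t)"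
      using dx tnT[of n] by auto
    show "\<And>t i j. tn n \<le> t \<Longrightarrow> i \<in> {1..N} \<Longrightarrow> j \<in> {1..N} \<Longrightarrow> 0 \<le> a t i j \<and> a t i j \<le> 1"
      using ab tnT[of n] by auto
  qed (rule Mx_ge)
  have inv_lo: "mx n \<le> x t i" if "t \<ge> tn n" "i \<in> {1..N}" for t i n
  proof -
    have "xn t i \<le> - mx n"
    proof (rule invariance[OF finI _ _ _ that])
      show "\<And>t i. tn n \<le> t \<Longrightarrow> i \<in> {1..N} \<Longrightarrow>
        ((\<lambda>s. xn s i) has_real_derivative (\<Sum>j\<in>{1..N}-{i}. a t i j * (xn t j - xn t i))) (at t)"
        using dxn tnT[of n] by auto
      show "\<And>t i j. tn n \<le> t \<Longrightarrow> i \<in> {1..N} \<Longrightarrow> j \<in> {1..N} \<Longrightarrow> 0 \<le> a t i j \<and> a t i j \<le> 1"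
        using ab tnT[of n] by auto
    qed (use mx_le in \<open>auto simp: xn_def\<close>)
    then show ?thesis unfolding xn_def by simp
  qed
  have tnS: "tn (Suc n) = tn n + 1" for n unfolding tn_def by simp
  have dec_up: "x (tn (Suc n)) i \<le> Mx n - \<rho> * (Mx n - mx n)" if "i \<in> {1..N}" for n i
  proof -
    have "mx n \<in> (\<lambda>i. x (tn n) i) ` {1..N}" unfolding mx_def using N1 by (intro Min_in) auto
    then obtain p where p: "p \<in> {1..N}" "x (tn n) p = mx n" by auto
    have "x (tn n + 1) i \<le> Mx n - \<kappa> * exp (- real (card {1..N})) * (Mx n - x (tn n) p)"
    proof (rule decay[OF finI _ _ _ \<kappa>(1,2) _ p(1) that])
      show "\<And>t i. tn n \<le> t \<Longrightarrow> i \<in> {1..N} \<Longrightarrow>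
        ((\<lambda>s. x s i) has_real_derivative (\<Sum>j\<in>{1..N}-{i}. a t i j * (x t j - x t i))) (at t)"
        using dx tnT[of n] by auto
      show "\<And>t i j. tn n \<le> t \<Longrightarrow> i \<in> {1..N} \<Longrightarrow> j \<in> {1..N} \<Longrightarrow> 0 \<le> a t i j \<and> a t i j \<le> 1"
        using ab tnT[of n] by auto
      show "\<And>t i j. tn n \<le> t \<Longrightarrow> i \<in> {1..N} \<Longrightarrow> j \<in> {1..N} \<Longrightarrow> i \<noteq> j \<Longrightarrow> \<kappa> \<le> a t i j"
        using alow tnT[of n] by auto
    qed (rule Mx_ge)
    then show ?thesis using p(2) tnS unfolding \<rho>_def by (simp add: mult.assoc)
  qed
  have dec_lo: "mx n + \<rho> * (Mx n - mx n) \<le> x (tn (Suc n)) i" if "i \<in> {1..N}" for n i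
  proof -
    have "Mx n \<in> (\<lambda>i. x (tn n) i) ` {1..N}" unfolding Mx_def using N1 by (intro Max_in) auto
    then obtain p where p: "p \<in> {1..N}" "x (tn n) p = Mx n" by auto
    have "xn (tn n + 1) i \<le> - mx n - \<kappa> * exp (- real (card {1..N})) * (- mx n - xn (tn n) p)"
    proof (rule decay[OF finI _ _ _ \<kappa>(1,2) _ p(1) that])
      show "\<And>t i. tn n \<le> t \<Longrightarrow> i \<in> {1..N} \<Longrightarrow>
        ((\<lambda>s. xn s i) has_real_derivative (\<Sum>j\<in>{1..N}-{i}. a t i j * (xn t j - xn t i))) (at t)"
        using dxn tnT[of n] by auto
      show "\<And>t i j. tn n \<le> t \<Longrightarrow> i \<in> {1..N} \<Longrightarrow> j \<in> {1..N} \<Longrightarrow> 0 \<le> a t i j \<and> a t i j \<le> 1"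
        using ab tnT[of n] by auto
      show "\<And>t i j. tn n \<le> t \<Longrightarrow> i \<in> {1..N} \<Longrightarrow> j \<in> {1..N} \<Longrightarrow> i \<noteq> j \<Longrightarrow> \<kappa> \<le> a t i j"
        using alow tnT[of n] by auto
    qed (use mx_le in \<open>auto simp: xn_def\<close>)
    then show ?thesis using p(2) tnS unfolding \<rho>_def xn_def by (simp add: algebra_simps)
  qed
  define D where "D n = Mx n - mx n" for n
  have Dnn: "D n \<ge> 0" for n unfolding D_def using Mx_ge[OF oneI, of n] mx_le[OF oneI, of n] by simp
  have DS: "D (Suc n) \<le> (1 - 2 * \<rho>) * D n" for n
  proof -
    have "Mx (Suc n) \<le> Mx n - \<rho> * (Mx n - mx n)" unfolding Mx_def[of "Suc n"] using N1 dec_up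
      by (intro Max.boundedI) auto
    moreover have "mx (Suc n) \<ge> mx n + \<rho> * (Mx n - mx n)" unfolding mx_def[of "Suc n"] using N1 dec_lo
      by (intro Min.boundedI) auto
    ultimately show ?thesis unfolding D_def by (simp add: algebra_simps)
  qed
  define q where "q = 1 - 2 * \<rho>"
  have q: "0 \<le> q" "q < 1" unfolding q_def using \<rho> by auto
  have Dpow: "D n \<le> q ^ n * D 0" for n
  proof (induction n)
    case (Suc n)
    have "D (Suc n) \<le> q * D n" using DS[of n] unfolding q_def .
    also have "\<dots> \<le> q * (q ^ n * D 0)" using Suc q by (intro mult_left_mono) auto
    finally show ?case by simp
  qed simp
  have Mx0: "Mx 0 \<le> 1" unfolding Mx_def using N1 x_range[OF tn0] by (intro Max.boundedI) auto
  have mx0: "mx 0 \<ge> -1" unfolding mx_def using N1 x_range[OF tn0] by (intro Min.boundedI) auto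
  have D0: "D 0 \<le> 2" unfolding D_def using Mx0 mx0 by simp
  have mxMx: "mx n \<le> Mx m" for n m
  proof -
    have "mx n \<le> x (tn (max n m)) 1" by (rule inv_lo[OF _ oneI]) (simp add: tn_def)
    also have "\<dots> \<le> Mx m" by (rule inv_up[OF _ oneI]) (simp add: tn_def)
    finally show ?thesis .
  qed
  define L where "L = Inf (range Mx)"
  have bdd: "bdd_below (range Mx)" using mxMx[of 0] by (intro bdd_belowI[of _ "mx 0"]) auto
  have LM: "L \<le> Mx n" for n unfolding L_def using bdd by (intro cInf_lower) auto
  have mL: "mx n \<le> L" for n unfolding L_def using mxMx by (intro cInf_greatest) auto
  show ?thesis
  proof (intro bexI[of _ L] ballI)
    show "L \<in> {-1..1}" using LM[of 0] mL[of 0] Mx0 mx0 by simp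
    fix i assume i: "i \<in> {1..N}"
    show "((\<lambda>t. x t i) \<longlongrightarrow> L) at_top"
    proof (rule tendstoI)
      fix e :: real assume e: "e > 0"
      obtain n where n: "q ^ n < e / 2" using real_arch_pow_inv[of "e/2" q] e q by auto
      have "\<forall>t\<ge>tn n. dist (x t i) L < e"
      proof (intro allI impI)
        fix t assume t: "t \<ge> tn n"
        have "\<bar>x t i - L\<bar> \<le> D n" unfolding D_def abs_le_iff using inv_up[OF t i] inv_lo[OF t i] LM[of n] mL[of n] by linarith
        also have "\<dots> \<le> q ^ n * D 0" by (rule Dpow)
        also have "\<dots> \<le> q ^ n * 2" using D0 q by (intro mult_left_mono) auto
        also have "\<dots> < e" using n by simp
        finally show "dist (x t i) L < e" by (simp add: dist_real_def)
      qed
      then show "eventually (\<lambda>t. dist (x t i) L < e) at_top"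
        unfolding eventually_at_top_linorder by blast
    qed
  qed
qed

end
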